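(* Let a power network have node set $V$, initial active link set $\mathcal{E}^0$, link weights $w\in\mathbb{R}_{\ge 0}^{\mathcal{E}^0}$, link capacities $c\in\mathbb{R}_{\ge 0}^{\mathcal{E}^0}$, initial balanced supply-demand vector $p^0\in\mathcal{B}_{\mathcal{E}^0}$, and horizon $N\ge 1$. Then for every aggregated state $(\mathcal{E},P)$ reachable from $(\mathcal{E}^0,\{p^0\})$ under the aggregated dynamics, and for every $t\in\{1,\dots,N\}$, $$\mathbb{J}_t(\mathcal{E},P)=\sup_{p\in P} J_t(\mathcal{E},p).$$
   Context: Network model. The network is a finite undirected multigraph with node set $V$ and link set $\mathcal{E}^0$; each link is given an arbitrary reference orientation. For an active link set $\mathcal{E}\subseteq\mathcal{E}^0$, let $A$ be the node–link incidence matrix of $(V,\mathcal{E})$ (the column of link $i$ has $+1$ at its tail, $-1$ at its head, $0$ elsewhere), $W=\mathrm{diag}(w_i)_{i\in\mathcal{E}}$, $L(\mathcal{E})=AWA^\top$, and $L^\dagger(\mathcal{E})$ its Moore–Penrose pseudo-inverse. Let $\mathcal{B}_{\mathcal{E}}=\{u\in\mathbb{R}^V:\sum_{v\in V^{(i)}}u_v=0\text{ for every connected component }V^{(i)}\text{ of }(V,\mathcal{E})\}$. For $p\in\mathcal{B}_{\mathcal{E}}$ the link flow is $f(\mathcal{E},p)=WA^\top L^\dagger(\mathcal{E})p\in\mathbb{R}^{\mathcal{E}}$. Nodes are supply nodes $V_+$, demand nodes $V_-$ or transmission nodes; $s\in\{1,0,-1\}^V$ has $s_v=1$ on $V_+$,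 $s_v=-1$ on $V_-$, $s_v=0$ otherwise. $\mathrm{sign}(x)=1$ if $x\ge0$ and $-1$ if $x<0$. For $p\in\mathbb{R}^V$, $\mathrm{cube}(p)=\{u\in\mathbb{R}^V: 0\le \mathrm{sign}(p_v)u_v\le|p_v|\ \forall v\}$, and for a set $P$, $\mathrm{cube}(P)=\bigcup_{p\in P}\mathrm{cube}(p)$. Admissible controls: $U(\mathcal{E},p)=\mathrm{cube}(p)\cap\mathcal{B}_{\mathcal{E}}$, and for a set $P$, $U(\mathcal{E},P)=\mathcal{B}_{\mathcal{E}}\cap\mathrm{cube}(P)$. For $u\in\mathcal{B}_{\mathcal{E}}$, $\mathcal{F}_{\mathcal{E}}(\mathcal{E},u)=\{i\in\mathcal{E}:|f_i(\mathcal{E},u)|\le c_i\}$. Unaggregated values: $J_1(\mathcal{E},p)=\max\{s^\top u: u\in U(\mathcal{E},p),\ |f_i(\mathcal{E},u)|\le c_i\ \forall i\in\mathcal{E}\}$ and, for $t=2,\dots,N$, $J_t(\mathcal{E},p)=\sup_{u\in U(\mathcal{E},p)}J_{t-1}(\mathcal{F}_{\mathcal{E}}(\mathcal{E},u),u)$. Aggregation. For $\beta\in\{-1,0,1\}^{\mathcal{E}}$, $U(\mathcal{E},P,\beta)=\{u\in U(\mathcal{E},P): f_i(\mathcal{E},u)<-c_i\text{ if }\beta_i=-1;\ |f_i(\mathcal{E},u)|\le c_i\text{ if }\beta_i=0;\ f_i(\mathcal{E},u)>c_i\text{ if }\beta_i=1;\ \forall i\in\mathcal{E}\}$, and $\mathbb{U}(\mathcal{E},P)$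 is the collection of the nonempty sets $U(\mathcal{E},P,\beta)$, $\beta\in\{-1,0,1\}^{\mathcal{E}}$. For a set $U$ of vectors, $\mathcal{F}_{\mathcal{E}}(\mathcal{E},U)=\{i\in\mathcal{E}:|f_i(\mathcal{E},u)|\le c_i\ \forall u\in U\}$. Aggregated dynamics starting at $(\mathcal{E}^0,\{p^0\})$: $(\mathcal{E}^{t+1},P^{t+1})=(\mathcal{F}_{\mathcal{E}}(\mathcal{E}^t,U^t),U^t)$ with $U^t\in\mathbb{U}(\mathcal{E}^t,P^t)$. Aggregated values: $\mathbb{J}_1(\mathcal{E},P)=\max\{s^\top u: u\in U(\mathcal{E},\mathrm{cl}\,P),\ |f_i(\mathcal{E},u)|\le c_i\ \forall i\in\mathcal{E}\}$ ($\mathrm{cl}$ = closure) and, for $t\in\{1,\dots,N-1\}$, $\mathbb{J}_{t+1}(\mathcal{E},P)=\max_{U\in\mathbb{U}(\mathcal{E},P)}\mathbb{J}_t(\mathcal{F}_{\mathcal{E}}(\mathcal{E},U),U)$. *)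

theory Defs
  imports "HOL-Analysis.Analysis"
begin

definition pinv :: "real^'n^'m \<Rightarrow> real^'m^'n" where
  "pinv A = (THE X. A ** X ** A = A \<and> X ** A ** X = X \<and>
                    transpose (A ** X) = A ** X \<and> transpose (X ** A) = X ** A)"

text \<open>A power network: node set = the finite type 'v, links = elements of the finite
  type 'e (each with a reference orientation tail to head), weights, capacities and the
  supply/demand sign vector s.\<close>
record ('v::finite, 'e) network =
  tail :: "'e \<Rightarrow> 'v"
  head :: "'e \<Rightarrow> 'v"
  weight :: "'e \<Rightarrow> real"
  cap :: "'e \<Rightarrow> real"
  sv :: "real^'v"

definition incidence :: "('v::finite, 'e::finite) network \<Rightarrow> 'e set \<Rightarrow> real^'e^'v" where
  "incidence G E = (\<chi> v i. if i \<in> E then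
      (if v = tail G i then 1 else 0) - (if v = head G i then 1 else 0) else 0)"

definition wmat :: "('v::finite, 'e::finite) network \<Rightarrow> 'e set \<Rightarrow> real^'e^'e" where
  "wmat G E = (\<chi> i j. if i = j \<and> i \<in> E then weight G i else 0)"

definition lap :: "('v::finite, 'e::finite) network \<Rightarrow> 'e set \<Rightarrow> real^'v^'v" where
  "lap G E = incidence G E ** wmat G E ** transpose (incidence G E)"

text \<open>Link flow f(E,p) = W A^T L^+ p (only entries i in E are meaningful).\<close>
definition flow :: "('v::finite, 'e::finite) network \<Rightarrow> 'e set \<Rightarrow> real^'v \<Rightarrow> real^'e" where
  "flow G E p = (wmat G E ** transpose (incidence G E) ** pinv (lap G E)) *v p"

definition adjacent :: "('v::finite, 'e) network \<Rightarrow> 'e set \<Rightarrow> 'v \<Rightarrow> 'v \<Rightarrow> bool" where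
  "adjacent G E x y \<longleftrightarrow> (\<exists>i\<in>E. (tail G i = x \<and> head G i = y) \<or> (tail G i = y \<and> head G i = x))"

definition connected_nodes :: "('v::finite, 'e) network \<Rightarrow> 'e set \<Rightarrow> 'v \<Rightarrow> 'v \<Rightarrow> bool" where
  "connected_nodes G E = (adjacent G E)\<^sup>*\<^sup>*"

definition balanced :: "('v::finite, 'e) network \<Rightarrow> 'e set \<Rightarrow> (real^'v) set" where
  "balanced G E = {u. \<forall>x. (\<Sum>y\<in>{y. connected_nodes G E x y}. u $ y) = 0}"

definition sign :: "real \<Rightarrow> real" where
  "sign x = (if x \<ge> 0 then 1 else -1)"

definition cube :: "real^'v \<Rightarrow> (real^'v) set" where
  "cube p = {u. \<forall>v. 0 \<le> sign (p $ v) * u $ v \<and> sign (p $ v) * u $ v \<le> \<bar>p $ v\<bar>}"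

definition cubeS :: "(real^'v) set \<Rightarrow> (real^'v) set" where
  "cubeS P = (\<Union>p\<in>P. cube p)"

definition Uctrl :: "('v::finite, 'e) network \<Rightarrow> 'e set \<Rightarrow> real^'v \<Rightarrow> (real^'v) set" where
  "Uctrl G E p = cube p \<inter> balanced G E"

definition UctrlS :: "('v::finite, 'e) network \<Rightarrow> 'e set \<Rightarrow> (real^'v) set \<Rightarrow> (real^'v) set" where
  "UctrlS G E P = balanced G E \<inter> cubeS P"

definition flinks :: "('v::finite, 'e::finite) network \<Rightarrow> 'e set \<Rightarrow> real^'v \<Rightarrow> 'e set" where
  "flinks G E u = {i\<in>E. \<bar>flow G E u $ i\<bar> \<le> cap G i}"

definition flinksS :: "('v::finite, 'e::finite) network \<Rightarrow> 'e set \<Rightarrow> (real^'v) set \<Rightarrow> 'e set" where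
  "flinksS G E U = {i\<in>E. \<forall>u\<in>U. \<bar>flow G E u $ i\<bar> \<le> cap G i}"

definition obj :: "('v::finite, 'e) network \<Rightarrow> real^'v \<Rightarrow> real" where
  "obj G u = (\<Sum>v\<in>UNIV. sv G $ v * u $ v)"

text \<open>Unaggregated values (the maximum is attained, written as Sup).\<close>
definition J1 :: "('v::finite, 'e::finite) network \<Rightarrow> 'e set \<Rightarrow> real^'v \<Rightarrow> real" where
  "J1 G E p = Sup {obj G u | u. u \<in> Uctrl G E p \<and> (\<forall>i\<in>E. \<bar>flow G E u $ i\<bar> \<le> cap G i)}"

fun J :: "nat \<Rightarrow> ('v::finite, 'e::finite) network \<Rightarrow> 'e set \<Rightarrow> real^'v \<Rightarrow> real" where
  "J 0 G E p = 0"
| "J (Suc 0) G E p = J1 G E p"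
| "J (Suc (Suc t)) G E p = (SUP u\<in>Uctrl G E p. J (Suc t) G (flinks G E u) u)"

definition UctrlB :: "('v::finite, 'e::finite) network \<Rightarrow> 'e set \<Rightarrow> (real^'v) set \<Rightarrow> ('e \<Rightarrow> int)
    \<Rightarrow> (real^'v) set" where
  "UctrlB G E P \<beta> = {u \<in> UctrlS G E P. \<forall>i\<in>E.
      (\<beta> i = -1 \<longrightarrow> flow G E u $ i < - cap G i) \<and>
      (\<beta> i = 0 \<longrightarrow> \<bar>flow G E u $ i\<bar> \<le> cap G i) \<and>
      (\<beta> i = 1 \<longrightarrow> flow G E u $ i > cap G i)}"

definition UU :: "('v::finite, 'e::finite) network \<Rightarrow> 'e set \<Rightarrow> (real^'v) set \<Rightarrow> (real^'v) set set" where
  "UU G E P = {UctrlB G E P \<beta> | \<beta>. (\<forall>i\<in>E. \<beta> i \<in> {-1, 0, 1}) \<and> UctrlB G E P \<beta> \<noteq> {}}"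

inductive agg_reach :: "('v::finite, 'e::finite) network \<Rightarrow> 'e set \<Rightarrow> real^'v
    \<Rightarrow> 'e set \<Rightarrow> (real^'v) set \<Rightarrow> bool"
  for G E0 p0 where
  init: "agg_reach G E0 p0 E0 {p0}"
| step: "agg_reach G E0 p0 E P \<Longrightarrow> U \<in> UU G E P \<Longrightarrow> agg_reach G E0 p0 (flinksS G E U) U"

definition JJ1 :: "('v::finite, 'e::finite) network \<Rightarrow> 'e set \<Rightarrow> (real^'v) set \<Rightarrow> real" where
  "JJ1 G E P = Sup {obj G u | u. u \<in> UctrlS G E (closure P) \<and> (\<forall>i\<in>E. \<bar>flow G E u $ i\<bar> \<le> cap G i)}"

fun JJ :: "nat \<Rightarrow> ('v::finite, 'e::finite) network \<Rightarrow> 'e set \<Rightarrow> (real^'v) set \<Rightarrow> real" where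
  "JJ 0 G E P = 0"
| "JJ (Suc 0) G E P = JJ1 G E P"
| "JJ (Suc (Suc t)) G E P = Max ((\<lambda>U. JJ (Suc t) G (flinksS G E U) U) ` UU G E P)"

end

theory Submission
  imports Defs
begin

lemma sign_cases: "sign x = 1 \<or> sign x = -1" by (simp add: sign_def)

lemma zero_cube: "0 \<in> cube p"
  by (simp add: cube_def sign_def)

lemma cube_abs: "u \<in> cube p \<Longrightarrow> \<bar>u $ v\<bar> \<le> \<bar>p $ v\<bar>"
proof -
  assume "u \<in> cube p"
  then have h: "0 \<le> sign (p $ v) * u $ v" "sign (p $ v) * u $ v \<le> \<bar>p $ v\<bar>"
    by (auto simp: cube_def)
  then show ?thesis using sign_cases[of "p $ v"] by auto
qed

lemma zero_balanced: "0 \<in> balanced G E"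
  by (simp add: balanced_def)

lemma flow_zero: "flow G E 0 = 0"
  by (simp add: flow_def)

lemma zero_Uctrl: "0 \<in> Uctrl G E p"
  by (simp add: Uctrl_def zero_cube zero_balanced)

lemma obj_le:
  assumes "\<forall>v. sv G $ v \<in> {-1, 0, 1}"
  shows "obj G u \<le> (\<Sum>v\<in>UNIV. \<bar>u $ v\<bar>)"
  unfolding obj_def
proof (rule sum_mono)
  fix v
  have "sv G $ v \<in> {-1,0,1}" using assms by auto
  then show "sv G $ v * u $ v \<le> \<bar>u $ v\<bar>" by auto
qed

lemma obj_cube:
  assumes "\<forall>v. sv G $ v \<in> {-1, 0, 1}" "u \<in> cube p"
  shows "obj G u \<le> (\<Sum>v\<in>UNIV. \<bar>p $ v\<bar>)"
  using obj_le[OF assms(1), of u] sum_mono[of UNIV "\<lambda>v. \<bar>u $ v\<bar>" "\<lambda>v. \<bar>p $ v\<bar>"]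
    cube_abs[OF assms(2)] by force

lemma obj_zero: "obj G 0 = 0" by (simp add: obj_def)

lemma J_bounds:
  assumes sv: "\<forall>v. sv G $ v \<in> {-1, 0, 1}"
  shows "\<forall>i\<in>E. cap G i \<ge> 0 \<Longrightarrow> 0 \<le> J (Suc n) G E p \<and> J (Suc n) G E p \<le> (\<Sum>v\<in>UNIV. \<bar>p $ v\<bar>)"
proof (induction n arbitrary: E p)
  case 0
  let ?S = "{obj G u | u. u \<in> Uctrl G E p \<and> (\<forall>i\<in>E. \<bar>flow G E u $ i\<bar> \<le> cap G i)}"
  have z: "0 \<in> ?S" using 0 zero_Uctrl[of G E p] obj_zero[of G]
    by (auto simp: flow_zero intro!: exI[of _ 0])
  have b: "\<And>x. x \<in> ?S \<Longrightarrow> x \<le> (\<Sum>v\<in>UNIV. \<bar>p $ v\<bar>)"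
    using obj_cube[OF sv] by (auto simp: Uctrl_def)
  have bd: "bdd_above ?S" using b by (auto simp: bdd_above_def)
  have "0 \<le> Sup ?S" using cSup_upper[OF z bd] .
  moreover have "Sup ?S \<le> (\<Sum>v\<in>UNIV. \<bar>p $ v\<bar>)" using cSup_least[of ?S] z b by blast
  ultimately show ?case by (simp add: J1_def)
next
  case (Suc n)
  let ?f = "\<lambda>u. J (Suc n) G (flinks G E u) u"
  have cf: "\<forall>i\<in>flinks G E u. cap G i \<ge> 0" for u using Suc.prems by (auto simp: flinks_def)
  have b: "?f u \<le> (\<Sum>v\<in>UNIV. \<bar>p $ v\<bar>)" if "u \<in> Uctrl G E p" for u
  proof -
    have "?f u \<le> (\<Sum>v\<in>UNIV. \<bar>u $ v\<bar>)" using Suc.IH[OF cf] by blast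
    also have "\<dots> \<le> (\<Sum>v\<in>UNIV. \<bar>p $ v\<bar>)"
      using that by (intro sum_mono) (auto simp: Uctrl_def intro: cube_abs)
    finally show ?thesis .
  qed
  have bd: "bdd_above (?f ` Uctrl G E p)" using b by (auto simp: bdd_above_def)
  have "0 \<le> Sup (?f ` Uctrl G E p)"
    by (rule cSUP_upper2[OF bd zero_Uctrl]) (use Suc.IH[OF cf] in blast)
  moreover have "Sup (?f ` Uctrl G E p) \<le> (\<Sum>v\<in>UNIV. \<bar>p $ v\<bar>)"
    using cSUP_least[of "Uctrl G E p" ?f] zero_Uctrl b by blast
  ultimately show ?case by simp
qed


lemma UctrlS_Union: "UctrlS G E P = (\<Union>p\<in>P. Uctrl G E p)"
  by (auto simp: UctrlS_def Uctrl_def cubeS_def)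

lemma UU_sub: "U \<in> UU G E P \<Longrightarrow> U \<subseteq> UctrlS G E P"
  by (auto simp: UU_def UctrlB_def)

definition beta_of :: "('v::finite, 'e::finite) network \<Rightarrow> 'e set \<Rightarrow> real^'v \<Rightarrow> 'e \<Rightarrow> int" where
  "beta_of G E u i = (if \<bar>flow G E u $ i\<bar> \<le> cap G i then 0 else if flow G E u $ i > cap G i then 1 else -1)"

lemma UU_cover: "UctrlS G E P = \<Union> (UU G E P)"
proof
  show "\<Union> (UU G E P) \<subseteq> UctrlS G E P" using UU_sub by blast
  show "UctrlS G E P \<subseteq> \<Union> (UU G E P)"
  proof
    fix u assume u: "u \<in> UctrlS G E P"
    let ?b = "beta_of G E u"
    have "u \<in> UctrlB G E P ?b" using u by (auto simp: UctrlB_def beta_of_def split: if_splits)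
    moreover have "\<forall>i\<in>E. ?b i \<in> {-1,0,1}" by (auto simp: beta_of_def)
    ultimately show "u \<in> \<Union> (UU G E P)" unfolding UU_def by blast
  qed
qed

lemma UctrlB_restrict: "UctrlB G E P \<beta> = UctrlB G E P (\<lambda>i. if i \<in> E then \<beta> i else 0)"
  by (simp add: UctrlB_def)

lemma UU_finite:
  fixes G :: "('v::finite, 'e::finite) network"
  shows "finite (UU G E P)"
proof -
  let ?B = "PiE (UNIV :: 'e set) (\<lambda>_. {-1,0,1::int})"
  have fin: "finite ?B" by (rule finite_PiE) auto
  have "UU G E P \<subseteq> (\<lambda>\<beta>. UctrlB G E P \<beta>) ` ?B"
  proof
    fix U assume "U \<in> UU G E P"
    then obtain \<beta> where U: "U = UctrlB G E P \<beta>" and b: "\<forall>i\<in>E. \<beta> i \<in> {-1,0,1}"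
      by (auto simp: UU_def)
    let ?b = "\<lambda>i. if i \<in> E then \<beta> i else 0"
    have bB: "?b \<in> ?B" unfolding PiE_iff using b by simp
    have Ub: "U = UctrlB G E P ?b" using U UctrlB_restrict[of G E P \<beta>] by simp
    show "U \<in> (\<lambda>\<beta>. UctrlB G E P \<beta>) ` ?B" using image_eqI[where f="UctrlB G E P", OF Ub bB] .
  qed
  then show ?thesis using finite_imageI[OF fin, of "UctrlB G E P"] by (rule finite_subset)
qed

lemma zero_UctrlS: "P \<noteq> {} \<Longrightarrow> 0 \<in> UctrlS G E P"
proof -
  assume "P \<noteq> {}"
  then obtain p where "p \<in> P" by blast
  then show ?thesis unfolding UctrlS_Union using zero_Uctrl[of G E p] by blast
qed

lemma UU_ne: "P \<noteq> {} \<Longrightarrow> UU G E P \<noteq> {}"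
proof -
  assume "P \<noteq> {}"
  then have "0 \<in> \<Union> (UU G E P)" using zero_UctrlS UU_cover by metis
  then show ?thesis by blast
qed

lemma UU_mem_ne: "U \<in> UU G E P \<Longrightarrow> U \<noteq> {}"
  by (auto simp: UU_def)

lemma UU_flinks:
  assumes "U \<in> UU G E P" "u \<in> U"
  shows "flinks G E u = flinksS G E U"
proof -
  obtain \<beta> where U: "U = UctrlB G E P \<beta>" and b: "\<forall>i\<in>E. \<beta> i \<in> {-1,0,1}"
    using assms(1) by (auto simp: UU_def)
  have key: "\<bar>flow G E w $ i\<bar> \<le> cap G i \<longleftrightarrow> \<beta> i = 0" if "w \<in> U" "i \<in> E" for w i
  proof -
    have c: "(\<beta> i = -1 \<longrightarrow> flow G E w $ i < - cap G i) \<and>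
      (\<beta> i = 0 \<longrightarrow> \<bar>flow G E w $ i\<bar> \<le> cap G i) \<and>
      (\<beta> i = 1 \<longrightarrow> flow G E w $ i > cap G i)" using that U by (auto simp: UctrlB_def)
    have "\<beta> i \<in> {-1,0,1}" using b that by auto
    then show ?thesis using c by auto
  qed
  show ?thesis
  proof (rule set_eqI)
    fix i
    show "i \<in> flinks G E u \<longleftrightarrow> i \<in> flinksS G E U"
    proof (cases "i \<in> E")
      case True
      have k1: "i \<in> flinks G E u \<longleftrightarrow> \<beta> i = 0"
        using key[OF assms(2) True] True by (simp add: flinks_def)
      have k2: "i \<in> flinksS G E U \<longleftrightarrow> \<beta> i = 0"
      proof
        assume "i \<in> flinksS G E U"
        then have "\<bar>flow G E u $ i\<bar> \<le> cap G i" using assms(2) by (auto simp: flinksS_def)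
        then show "\<beta> i = 0" using key[OF assms(2) True] by simp
      next
        assume "\<beta> i = 0"
        then show "i \<in> flinksS G E U" using key[OF _ True] True by (auto simp: flinksS_def)
      qed
      show ?thesis using k1 k2 by simp
    qed (auto simp: flinks_def flinksS_def)
  qed
qed

lemma reach_inv:
  assumes "agg_reach G E0 p0 E P"
  shows "E \<subseteq> E0 \<and> P \<noteq> {} \<and> (\<forall>p\<in>P. \<forall>v. \<bar>p $ v\<bar> \<le> \<bar>p0 $ v\<bar>)"
  using assms
proof induction
  case init
  then show ?case by auto
next
  case (step E P U)
  have "flinksS G E U \<subseteq> E0" using step.IH by (auto simp: flinksS_def)
  moreover have "U \<noteq> {}" using step.hyps(2) by (rule UU_mem_ne)
  moreover have "\<forall>p\<in>U. \<forall>v. \<bar>p $ v\<bar> \<le> \<bar>p0 $ v\<bar>"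
  proof (intro ballI allI)
    fix u v assume "u \<in> U"
    then have "u \<in> UctrlS G E P" using UU_sub step.hyps(2) by blast
    then obtain p where "p \<in> P" "u \<in> cube p" by (auto simp: UctrlS_Union Uctrl_def)
    then show "\<bar>u $ v\<bar> \<le> \<bar>p0 $ v\<bar>" using cube_abs step.IH by (meson order_trans)
  qed
  ultimately show ?case by blast
qed


lemma flow_scale: "flow G E (a *\<^sub>R u) = a *\<^sub>R flow G E u"
  by (simp add: flow_def matrix_vector_mult_scaleR)

lemma obj_scale: "obj G (a *\<^sub>R u) = a * obj G u"
  by (simp add: obj_def sum_distrib_left algebra_simps)

lemma balanced_scale: "u \<in> balanced G E \<Longrightarrow> a *\<^sub>R u \<in> balanced G E"
  by (simp add: balanced_def sum_distrib_left[symmetric])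

lemma cube_comp:
  assumes u: "0 \<le> sign q * x" "sign q * x \<le> \<bar>q\<bar>"
    and d: "\<bar>p - q\<bar> \<le> \<delta>" and dK: "\<delta> * K < 1" and K: "q \<noteq> 0 \<longrightarrow> 1 / \<bar>q\<bar> \<le> K"
    and dpos: "0 \<le> \<delta>" and Kpos: "0 \<le> K"
  shows "0 \<le> sign p * ((1 - \<delta> * K) * x) \<and> sign p * ((1 - \<delta> * K) * x) \<le> \<bar>p\<bar>"
proof (cases "q = 0")
  case True
  then have "x = 0" using u by (simp add: sign_def)
  then show ?thesis by simp
next
  case False
  have aq: "\<bar>q\<bar> > 0" using False by simp
  have K1: "1 / \<bar>q\<bar> \<le> K" using K False by simp
  have "\<delta> / \<bar>q\<bar> \<le> \<delta> * K" using mult_left_mono[OF K1 dpos] by simp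
  then have "\<delta> / \<bar>q\<bar> < 1" using dK by linarith
  then have dq: "\<delta> < \<bar>q\<bar>" using aq by (simp add: divide_less_eq)
  have sp: "sign p = sign q"
  proof (cases "q > 0")
    case True
    then have "p > 0" using d dq by linarith
    then show ?thesis using True by (simp add: sign_def)
  next
    case f: False
    then have "q < 0" using False by linarith
    moreover then have "p < 0" using d dq by linarith
    ultimately show ?thesis by (simp add: sign_def)
  qed
  have "\<delta> = \<delta> / \<bar>q\<bar> * \<bar>q\<bar>" using aq by simp
  also have "\<dots> \<le> \<delta> * K * \<bar>q\<bar>" using mult_right_mono[OF \<open>\<delta> / \<bar>q\<bar> \<le> \<delta> * K\<close>, of "\<bar>q\<bar>"] aq by linarith
  finally have dle: "\<delta> \<le> \<delta> * K * \<bar>q\<bar>" .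
  have apos: "0 < 1 - \<delta> * K" using dK by simp
  have e: "sign p * ((1 - \<delta> * K) * x) = (1 - \<delta> * K) * (sign q * x)" using sp by simp
  have "0 \<le> (1 - \<delta> * K) * (sign q * x)" using apos u(1) by simp
  moreover have "(1 - \<delta> * K) * (sign q * x) \<le> (1 - \<delta> * K) * \<bar>q\<bar>"
    using apos u(2) by (simp add: mult_left_mono)
  moreover have "(1 - \<delta> * K) * \<bar>q\<bar> \<le> \<bar>q\<bar> - \<delta>" using dle by (simp add: algebra_simps)
  moreover have "\<bar>q\<bar> - \<delta> \<le> \<bar>p\<bar>" using d by linarith
  ultimately show ?thesis using e by linarith
qed


lemma approx:
  fixes G :: "('v::finite, 'e::finite) network"
  assumes u: "u \<in> cube q" "u \<in> balanced G E" "\<forall>i\<in>E. \<bar>flow G E u $ i\<bar> \<le> cap G i"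
    and q: "q \<in> closure P" and e: "\<epsilon> > 0"
  shows "\<exists>p\<in>P. \<exists>w. w \<in> cube p \<and> w \<in> balanced G E \<and> (\<forall>i\<in>E. \<bar>flow G E w $ i\<bar> \<le> cap G i)
           \<and> obj G w > obj G u - \<epsilon>"
proof -
  define K where "K = (\<Sum>v\<in>UNIV. if q$v = 0 then 0 else 1/\<bar>q$v\<bar>)"
  have Kpos: "0 \<le> K" unfolding K_def by (rule sum_nonneg) auto
  have Kv: "q$v \<noteq> 0 \<longrightarrow> 1/\<bar>q$v\<bar> \<le> K" for v
  proof
    assume "q$v \<noteq> 0"
    then have "1/\<bar>q$v\<bar> = (\<lambda>v. if q$v = 0 then 0 else 1/\<bar>q$v\<bar>) v" by simp
    also have "\<dots> \<le> K" unfolding K_def by (rule member_le_sum) auto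
    finally show "1/\<bar>q$v\<bar> \<le> K" .
  qed
  define M where "M = \<bar>obj G u\<bar>"
  have Mpos: "0 \<le> M" by (simp add: M_def)
  define d where "d = min (1/(K+1)) (\<epsilon>/((K+1)*(M+1)))"
  have dpos: "d > 0" using Kpos Mpos e by (simp add: d_def)
  obtain p where p: "p \<in> P" "dist p q < d" using q dpos unfolding closure_approachable by blast
  define \<delta> where "\<delta> = dist p q"
  have d0: "0 \<le> \<delta>" by (simp add: \<delta>_def)
  have dd: "\<delta> \<le> d" using p(2) by (simp add: \<delta>_def)
  have "\<delta> * K \<le> d * K" using mult_right_mono[OF dd Kpos] .
  also have "\<dots> \<le> 1/(K+1) * K" using mult_right_mono[OF _ Kpos, of d "1/(K+1)"] by (simp add: d_def)
  also have "\<dots> < 1" using Kpos by (simp add: field_simps)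
  finally have dK: "\<delta> * K < 1" .
  have comp: "\<bar>p$v - q$v\<bar> \<le> \<delta>" for v
    using component_le_norm_cart[of "p - q" v] by (simp add: \<delta>_def dist_norm)
  define a where "a = 1 - \<delta> * K"
  have a0: "0 < a" using dK by (simp add: a_def)
  have a1: "a \<le> 1" using d0 Kpos by (simp add: a_def)
  define w where "w = a *\<^sub>R u"
  have "w \<in> cube p"
    unfolding cube_def
  proof (intro CollectI allI)
    fix v
    have uv: "0 \<le> sign (q$v) * u$v" "sign (q$v) * u$v \<le> \<bar>q$v\<bar>" using u(1) by (auto simp: cube_def)
    show "0 \<le> sign (p $ v) * w $ v \<and> sign (p $ v) * w $ v \<le> \<bar>p $ v\<bar>"
      using cube_comp[OF uv comp dK Kv d0 Kpos] by (simp add: w_def a_def)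
  qed
  moreover have "w \<in> balanced G E" using balanced_scale[OF u(2)] by (simp add: w_def)
  moreover have "\<forall>i\<in>E. \<bar>flow G E w $ i\<bar> \<le> cap G i"
  proof
    fix i assume i: "i \<in> E"
    have "\<bar>flow G E w $ i\<bar> = a * \<bar>flow G E u $ i\<bar>" using a0 by (simp add: w_def flow_scale abs_mult)
    also have "\<dots> \<le> \<bar>flow G E u $ i\<bar>" using mult_right_mono[OF a1, of "\<bar>flow G E u $ i\<bar>"] by simp
    also have "\<dots> \<le> cap G i" using u(3) i by blast
    finally show "\<bar>flow G E w $ i\<bar> \<le> cap G i" .
  qed
  moreover have "obj G w > obj G u - \<epsilon>"
  proof -
    have "obj G w = a * obj G u" unfolding w_def by (rule obj_scale)
    then have ow: "obj G u - obj G w = \<delta> * K * obj G u" by (simp add: a_def algebra_simps)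
    have "\<delta> * K * obj G u \<le> \<delta> * K * M" using d0 Kpos by (simp add: M_def mult_left_mono)
    also have "\<dots> \<le> d * (K * M)" using mult_right_mono[OF dd, of "K*M"] Kpos Mpos by (simp add: mult.assoc)
    also have "\<dots> \<le> \<epsilon>/((K+1)*(M+1)) * (K * M)"
      using mult_right_mono[of d "\<epsilon>/((K+1)*(M+1))" "K*M"] Kpos Mpos by (simp add: d_def)
    also have "\<dots> < \<epsilon>"
    proof -
      have pos: "(K+1)*(M+1) > 0" using Kpos Mpos by simp
      have "K * M < (K+1)*(M+1)" using Kpos Mpos by (simp add: algebra_simps)
      then have "\<epsilon> * (K * M) < \<epsilon> * ((K+1)*(M+1))" using e by simp
      then show ?thesis using pos by (simp add: divide_less_eq)
    qed
    finally show ?thesis using ow by linarith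
  qed
  ultimately show ?thesis using p(1) by blast
qed


lemma JJ1_eq:
  fixes G :: "('v::finite, 'e::finite) network"
  assumes sv: "\<forall>v. sv G $ v \<in> {-1, 0, 1}" and cap0: "\<forall>i\<in>E. 0 \<le> cap G i"
    and Pne: "P \<noteq> {}" and bnd: "\<forall>p\<in>P. \<forall>v. \<bar>p $ v\<bar> \<le> \<bar>p0 $ v\<bar>"
  shows "JJ1 G E P = (SUP p\<in>P. J1 G E p)"
proof -
  define T where "T p = {u. u \<in> Uctrl G E p \<and> (\<forall>i\<in>E. \<bar>flow G E u $ i\<bar> \<le> cap G i)}" for p
  define Tc where "Tc = {u. u \<in> UctrlS G E (closure P) \<and> (\<forall>i\<in>E. \<bar>flow G E u $ i\<bar> \<le> cap G i)}"
  define B where "B = (\<Sum>v\<in>UNIV. \<bar>p0$v\<bar>)"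
  have J1T: "J1 G E p = Sup (obj G ` T p)" for p
  proof -
    have "{obj G u | u. u \<in> Uctrl G E p \<and> (\<forall>i\<in>E. \<bar>flow G E u $ i\<bar> \<le> cap G i)} = obj G ` T p"
      by (auto simp: T_def)
    then show ?thesis by (simp add: J1_def)
  qed
  have JJ1T: "JJ1 G E P = Sup (obj G ` Tc)"
  proof -
    have "{obj G u | u. u \<in> UctrlS G E (closure P) \<and> (\<forall>i\<in>E. \<bar>flow G E u $ i\<bar> \<le> cap G i)} = obj G ` Tc"
      by (auto simp: Tc_def)
    then show ?thesis by (simp add: JJ1_def)
  qed
  have T0: "0 \<in> T p" for p using zero_Uctrl[of G E p] cap0 by (simp add: T_def flow_zero)
  have bound: "obj G u \<le> B" if "p \<in> P" "u \<in> T p" for p u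
  proof -
    have "obj G u \<le> (\<Sum>v\<in>UNIV. \<bar>p $ v\<bar>)" using obj_cube[OF sv] that(2) by (auto simp: T_def Uctrl_def)
    also have "\<dots> \<le> B" unfolding B_def using bnd that(1) by (intro sum_mono) auto
    finally show ?thesis .
  qed
  define Tu where "Tu = (\<Union>p\<in>P. T p)"
  have bdd1: "bdd_above (\<Union>p\<in>P. obj G ` T p)" using bound by (auto simp: bdd_above_def)
  have eq1: "Sup (obj G ` Tu) = (SUP p\<in>P. Sup (obj G ` T p))"
    unfolding Tu_def using cSUP_UNION[OF Pne _ bdd1] T0 by blast
  have Tune: "Tu \<noteq> {}" using Pne T0 by (auto simp: Tu_def)
  have bdU: "bdd_above (obj G ` Tu)" using bound by (auto simp: bdd_above_def Tu_def)
  have sub: "Tu \<subseteq> Tc"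
  proof
    fix u assume "u \<in> Tu"
    then obtain p where "p \<in> P" "u \<in> T p" by (auto simp: Tu_def)
    moreover then have "p \<in> closure P" using closure_subset by blast
    ultimately show "u \<in> Tc" by (auto simp: T_def Tc_def UctrlS_Union)
  qed
  have le: "obj G u \<le> Sup (obj G ` Tu)" if uT: "u \<in> Tc" for u
  proof (rule field_le_epsilon)
    fix e :: real assume e: "0 < e"
    obtain q where q: "q \<in> closure P" "u \<in> cube q" "u \<in> balanced G E"
      and f: "\<forall>i\<in>E. \<bar>flow G E u $ i\<bar> \<le> cap G i"
      using uT by (auto simp: Tc_def UctrlS_Union Uctrl_def)
    obtain p w where p: "p \<in> P" and w: "w \<in> cube p" "w \<in> balanced G E"
      "\<forall>i\<in>E. \<bar>flow G E w $ i\<bar> \<le> cap G i" "obj G w > obj G u - e"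
      using approx[OF q(2) q(3) f q(1) e] by blast
    have "w \<in> Tu" using p w by (auto simp: Tu_def T_def Uctrl_def)
    then have "obj G w \<le> Sup (obj G ` Tu)" using bdU by (intro cSup_upper) auto
    then show "obj G u \<le> Sup (obj G ` Tu) + e" using w(4) by linarith
  qed
  have bdc: "bdd_above (obj G ` Tc)" using le by (auto simp: bdd_above_def)
  have "Sup (obj G ` Tc) \<le> Sup (obj G ` Tu)"
    using Tune sub le by (intro cSup_least) auto
  moreover have "Sup (obj G ` Tu) \<le> Sup (obj G ` Tc)"
    using Tune sub bdc by (intro cSup_subset_mono) auto
  ultimately have "Sup (obj G ` Tc) = Sup (obj G ` Tu)" by linarith
  then show ?thesis using JJ1T eq1 J1T by simp
qed


lemma main:
  fixes G :: "('v::finite, 'e::finite) network"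
  assumes sv: "\<forall>v. sv G $ v \<in> {-1, 0, 1}" and cap0: "\<forall>i\<in>E0. 0 \<le> cap G i"
  shows "agg_reach G E0 p0 E P \<Longrightarrow> JJ (Suc n) G E P = (SUP p\<in>P. J (Suc n) G E p)"
proof (induction n arbitrary: E P)
  case 0
  have inv: "E \<subseteq> E0" "P \<noteq> {}" "\<forall>p\<in>P. \<forall>v. \<bar>p $ v\<bar> \<le> \<bar>p0 $ v\<bar>" using reach_inv[OF 0] by auto
  have "\<forall>i\<in>E. 0 \<le> cap G i" using inv(1) cap0 by blast
  then show ?case using JJ1_eq[OF sv _ inv(2,3)] by simp
next
  case (Suc n)
  have inv: "E \<subseteq> E0" "P \<noteq> {}" "\<forall>p\<in>P. \<forall>v. \<bar>p $ v\<bar> \<le> \<bar>p0 $ v\<bar>" using reach_inv[OF Suc.prems] by auto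
  define g where "g u = J (Suc n) G (flinks G E u) u" for u
  define B where "B = (\<Sum>v\<in>UNIV. \<bar>p0$v\<bar>)"
  have gb: "g u \<le> B" if uS: "u \<in> UctrlS G E P" for u
  proof -
    have c: "\<forall>i\<in>flinks G E u. 0 \<le> cap G i" using inv(1) cap0 by (auto simp: flinks_def)
    obtain p where p: "p \<in> P" "u \<in> cube p" using uS by (auto simp: UctrlS_Union Uctrl_def)
    have "g u \<le> (\<Sum>v\<in>UNIV. \<bar>u $ v\<bar>)" using J_bounds[OF sv c] by (simp add: g_def)
    also have "\<dots> \<le> B" unfolding B_def
    proof (intro sum_mono)
      fix v
      have "\<bar>p $ v\<bar> \<le> \<bar>p0 $ v\<bar>" using inv(3) p(1) by blast
      then show "\<bar>u $ v\<bar> \<le> \<bar>p0 $ v\<bar>" using cube_abs[OF p(2), of v] by linarith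
    qed
    finally show ?thesis .
  qed
  have IH': "JJ (Suc n) G (flinksS G E U) U = Sup (g ` U)" if U: "U \<in> UU G E P" for U
  proof -
    have r: "agg_reach G E0 p0 (flinksS G E U) U" using agg_reach.step[OF Suc.prems U] .
    have "JJ (Suc n) G (flinksS G E U) U = (SUP u\<in>U. J (Suc n) G (flinksS G E U) u)"
      using Suc.IH[OF r] .
    also have "\<dots> = Sup (g ` U)" unfolding g_def
      using UU_flinks[OF U] by (intro SUP_cong) auto
    finally show ?thesis .
  qed
  have UUne: "UU G E P \<noteq> {}" using UU_ne[OF inv(2)] .
  have "JJ (Suc (Suc n)) G E P = Max ((\<lambda>U. JJ (Suc n) G (flinksS G E U) U) ` UU G E P)" by simp
  also have "\<dots> = Max ((\<lambda>U. Sup (g ` U)) ` UU G E P)"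
    using IH' by (intro arg_cong[where f=Max] image_cong) auto
  also have "\<dots> = (SUP U\<in>UU G E P. Sup (g ` U))"
    using UUne UU_finite[of G E P] by (intro cSup_eq_Max[symmetric]) auto
  also have "\<dots> = Sup (g ` \<Union> ((\<lambda>U. U) ` UU G E P))"
  proof (rule cSUP_UNION[symmetric])
    show "UU G E P \<noteq> {}" by (rule UUne)
    show "\<And>x. x \<in> UU G E P \<Longrightarrow> x \<noteq> {}" by (rule UU_mem_ne)
    show "bdd_above (\<Union>x\<in>UU G E P. g ` x)"
      using gb UU_sub unfolding bdd_above_def by blast
  qed
  also have "\<dots> = Sup (g ` UctrlS G E P)" using UU_cover[of G E P] by simp
  also have "\<dots> = Sup (g ` \<Union> (Uctrl G E ` P))" by (simp add: UctrlS_Union)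
  also have "\<dots> = (SUP p\<in>P. Sup (g ` Uctrl G E p))"
  proof (rule cSUP_UNION)
    show "P \<noteq> {}" by (rule inv(2))
    show "\<And>x. x \<in> P \<Longrightarrow> Uctrl G E x \<noteq> {}" using zero_Uctrl by blast
    show "bdd_above (\<Union>x\<in>P. g ` Uctrl G E x)"
      using gb unfolding bdd_above_def UctrlS_Union by blast
  qed
  also have "\<dots> = (SUP p\<in>P. J (Suc (Suc n)) G E p)" by (simp add: g_def)
  finally show ?case .
qed

theorem theorem1:
  fixes G :: "('v::finite, 'e::finite) network" and E0 :: "'e set"
    and p0 :: "real^'v" and N :: nat
  assumes "\<forall>i\<in>E0. weight G i \<ge> 0"
    and "\<forall>i\<in>E0. cap G i \<ge> 0"
    and "\<forall>v. sv G $ v \<in> {-1, 0, 1}"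
    and "p0 \<in> balanced G E0"
    and "N \<ge> 1"
  shows "\<forall>E P. agg_reach G E0 p0 E P \<longrightarrow>
           (\<forall>t\<in>{1..N}. JJ t G E P = (SUP p\<in>P. J t G E p))"
proof (intro allI impI ballI)
  fix E P t assume r: "agg_reach G E0 p0 E P" and t: "t \<in> {1..N}"
  then obtain n where "t = Suc n" by (cases t) auto
  then show "JJ t G E P = (SUP p\<in>P. J t G E p)" using main[OF assms(3) assms(2) r] by simp
qed

end
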